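(* Let $\epsilon>0$ and $n\ge1$. Consider mechanisms $Q:\mathbb{R}^n\to\Delta(\mathbb{R}^n)$ of the form $Qu=u+V$, where the noise $V$ has distribution $g\in\Delta(\mathbb{R}^n)$ independent of the input $u$, and suppose $Q$ is $\epsilon$-Lipschitz private with respect to the $\ell_2$-norm on $\mathbb{R}^n$. Then $$\mathbb{E}_{V\sim g}\|V\|_2^2\;\ge\;\mathbb{E}_{V\sim l_2^n}\|V\|_2^2=\frac{n(n+1)}{\epsilon^2},$$ where $l_2^n$ is the probability density on $\mathbb{R}^n$ proportional to $e^{-\epsilon\|v\|_2}$, namely $l_2^n(v)=\frac{\epsilon^n\Gamma(\frac n2+1)}{\pi^{n/2}\Gamma(n+1)}e^{-\epsilon\|v\|_2}$; i.e. the mechanism adding noise with density $l_2^n$ minimizes the mean-squared error for the identity query $q(u)=u$ among all such mechanisms.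
   Context: $\Delta(\mathcal{Y})$ denotes the set of Borel probability measures on $\mathcal{Y}$. For a normed space $(\mathcal{U},\|\cdot\|)$, a mechanism $Q:\mathcal{U}\to\Delta(\mathcal{Y})$ is $\epsilon$-Lipschitz private if for all $u,u'\in\mathcal{U}$ and all measurable $\mathcal{S}\subseteq\mathcal{Y}$, $|\ln\mathbb{P}(Qu\in\mathcal{S})-\ln\mathbb{P}(Qu'\in\mathcal{S})|\le\epsilon\|u-u'\|$, equivalently $\mathbb{P}(Qu\in\mathcal{S})\le e^{\epsilon\|u-u'\|}\mathbb{P}(Qu'\in\mathcal{S})$. *)

theory Defs
  imports "HOL-Probability.Probability"
begin

definition lipschitz_private ::
  "real \<Rightarrow> ('a::real_normed_vector \<Rightarrow> 'b measure) \<Rightarrow> bool" where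
  "lipschitz_private eps Q \<longleftrightarrow>
     (\<forall>u u'. \<forall>S \<in> sets (Q u).
        measure (Q u) S \<le> exp (eps * norm (u - u')) * measure (Q u') S)"

definition additive_mech :: "'a::euclidean_space measure \<Rightarrow> 'a \<Rightarrow> 'a measure" where
  "additive_mech g u = distr g borel (\<lambda>v. u + v)"

definition l2_density :: "real \<Rightarrow> real^'n \<Rightarrow> real" where
  "l2_density eps v =
     eps ^ CARD('n) * Gamma (real CARD('n) / 2 + 1)
     / (pi powr (real CARD('n) / 2) * Gamma (real CARD('n) + 1))
     * exp (- eps * norm v)"

end

theory Submission
  imports Defs "HOL-Analysis.Analysis"
begin


lemma nn_integral_scale_euclid:
  fixes f :: "'a::euclidean_space \<Rightarrow> ennreal" and a :: real
  assumes [measurable]: "f \<in> borel_measurable borel" and a: "a > 0"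
  shows "(\<integral>\<^sup>+x. f x \<partial>lborel) = ennreal (a ^ DIM('a)) * (\<integral>\<^sup>+x. f (a *\<^sub>R x) \<partial>lborel)"
proof -
  have "(\<integral>\<^sup>+x. f x \<partial>lborel) = (\<integral>\<^sup>+x. f x \<partial>(density (distr lborel borel (\<lambda>x. 0 + a *\<^sub>R x)) (\<lambda>_. \<bar>a\<bar>^DIM('a))))"
    using lborel_affine[of a "0::'a"] a by simp
  also have "\<dots> = (\<integral>\<^sup>+x. ennreal (\<bar>a\<bar>^DIM('a)) * f x \<partial>(distr lborel borel (\<lambda>x. 0 + a *\<^sub>R x)))"
    by (subst nn_integral_density) auto
  also have "\<dots> = (\<integral>\<^sup>+x. ennreal (\<bar>a\<bar>^DIM('a)) * f (0 + a *\<^sub>R x) \<partial>lborel)"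
    by (subst nn_integral_distr) auto
  also have "\<dots> = ennreal (a ^ DIM('a)) * (\<integral>\<^sup>+x. f (a *\<^sub>R x) \<partial>lborel)"
    using a by (subst nn_integral_cmult) auto
  finally show ?thesis .
qed


lemma polar:
  fixes H :: "'a::euclidean_space \<Rightarrow> ennreal" and F :: "real \<Rightarrow> ennreal"
  assumes [measurable]: "H \<in> borel_measurable borel" "F \<in> borel_measurable borel"
   and fin: "(\<integral>\<^sup>+x. H x * indicator (ball 0 1) x \<partial>lborel) < \<infinity>"
   and hom: "\<And>t x. t > 0 \<Longrightarrow> H (t *\<^sub>R x) = H x"
  shows "(\<integral>\<^sup>+x. H x * F (norm x) \<partial>lborel) = (\<integral>\<^sup>+x. H x * indicator (ball 0 1) x \<partial>lborel) *
      (\<integral>\<^sup>+r. ennreal (real DIM('a) * r^(DIM('a)-1)) * indicator {0..} r * F r \<partial>lborel)"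
proof -
  define n where "n = DIM('a)"
  define \<kappa> where "\<kappa> = (\<integral>\<^sup>+x. H x * indicator (ball 0 1) x \<partial>lborel)"
  define M where "M = distr (density lborel H) borel (norm :: 'a \<Rightarrow> real)"
  define D where "D = density lborel (\<lambda>r::real. \<kappa> * (ennreal (real n * r^(n-1)) * indicator {0..} r))"
  have n: "n > 0" by (simp add: n_def)
  have [measurable]: "\<And>a. ball (0::'a) a \<in> sets borel" by auto
  have ballH: "(\<integral>\<^sup>+x. H x * indicator (ball 0 a) x \<partial>lborel) = ennreal (a^n) * \<kappa>" if a: "a > 0" for a
  proof -
    have "(\<integral>\<^sup>+x. H x * indicator (ball 0 a) x \<partial>lborel) = ennreal (a^n) * (\<integral>\<^sup>+x. H (a *\<^sub>R x) * indicator (ball 0 a) (a *\<^sub>R x) \<partial>lborel)"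
      unfolding n_def by (rule nn_integral_scale_euclid[OF _ a]) measurable
    also have "(\<lambda>x. H (a *\<^sub>R x) * indicator (ball 0 a) (a *\<^sub>R x)) = (\<lambda>x. H x * indicator (ball 0 1) x)"
      using a by (auto simp: hom indicator_def fun_eq_iff)
    finally show ?thesis by (simp add: \<kappa>_def)
  qed
  have powint: "(\<integral>\<^sup>+r. ennreal (real n * r^(n-1)) * indicator {0..} r * indicator {..<a} r \<partial>lborel) = ennreal (a^n)" if a: "a > 0" for a
  proof -
    have "(\<integral>\<^sup>+r. ennreal (real n * r^(n-1)) * indicator {0..} r * indicator {..<a} r \<partial>lborel)
       = (\<integral>\<^sup>+r. ennreal (real n * r^(n-1)) * indicator {0..a} r \<partial>lborel)"
      by (intro nn_integral_cong_AE eventually_mono[OF AE_lborel_singleton[of a]]) (auto simp: indicator_def)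
    also have "\<dots> = ennreal (a^n - 0^n)"
      using a n by (intro nn_integral_FTC_Icc) (auto intro!: derivative_eq_intros)
    finally show ?thesis using n by (simp add: zero_power)
  qed
  have M_lt: "emeasure M {..<a} = (if a > 0 then ennreal (a^n) * \<kappa> else 0)" for a
  proof -
    have "emeasure M {..<a} = (\<integral>\<^sup>+x. H x * indicator (ball 0 a) x \<partial>lborel)"
    proof -
      have e: "norm -` {..<a} \<inter> space (density lborel H) = ball (0::'a) a" by (auto simp: dist_norm)
      show ?thesis unfolding M_def
        by (subst emeasure_distr, simp, simp, subst e, subst emeasure_density) (auto intro!: nn_integral_cong simp: mult.commute)
    qed
    also have "\<dots> = (if a > 0 then ennreal (a^n) * \<kappa> else 0)"
      using ballH by (auto simp: ball_empty)
    finally show ?thesis .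
  qed
  have D_lt: "emeasure D {..<a} = (if a > 0 then ennreal (a^n) * \<kappa> else 0)" for a
  proof -
    have "emeasure D {..<a} = (\<integral>\<^sup>+r. \<kappa> * (ennreal (real n * r^(n-1)) * indicator {0..} r * indicator {..<a} r) \<partial>lborel)"
      unfolding D_def by (subst emeasure_density) (auto intro!: nn_integral_cong simp: mult.assoc)
    also have "\<dots> = \<kappa> * (\<integral>\<^sup>+r. ennreal (real n * r^(n-1)) * indicator {0..} r * indicator {..<a} r \<partial>lborel)"
      by (subst nn_integral_cmult) auto
    also have "\<dots> = (if a > 0 then ennreal (a^n) * \<kappa> else 0)"
    proof (cases "a > 0")
      case True then show ?thesis using powint by (simp add: mult.commute)
    next
      case False
      then have "(\<lambda>r. ennreal (real n * r^(n-1)) * indicator {0..} r * indicator {..<a} r) = (\<lambda>r. 0)"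
        by (auto simp: fun_eq_iff indicator_def)
      then show ?thesis using False by simp
    qed
    finally show ?thesis .
  qed
  have "M = D"
  proof (rule measure_eqI_generator_eq_countable[where E="range lessThan" and A="lessThan ` \<rat>" and \<Omega>=UNIV])
    show "Int_stable (range lessThan :: real set set)"
      unfolding Int_stable_def
    proof clarify
      fix a b :: real
      have "{..<a} \<inter> {..<b} = {..<min a b}" by auto
      then show "{..<a} \<inter> {..<b} \<in> range lessThan" by (metis rangeI)
    qed
    show "range lessThan \<subseteq> Pow (UNIV :: real set)" by auto
    show "sets M = sigma_sets UNIV (range lessThan)" "sets D = sigma_sets UNIV (range lessThan)"
      unfolding M_def D_def by (simp_all add: borel_Iio)
    show "emeasure M X = emeasure D X" if "X \<in> range lessThan" for X
      using that M_lt D_lt by auto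
    show "lessThan ` \<rat> \<subseteq> range lessThan" by auto
    show "\<Union> (lessThan ` \<rat>) = (UNIV :: real set)"
    proof -
      have "\<exists>q\<in>\<rat>. x < q" for x :: real
        using Rats_dense_in_real[of x "x+1"] by auto
      then show ?thesis by auto
    qed
    show "countable (lessThan ` \<rat> :: real set set)" by (simp add: countable_rat)
    show "emeasure M X \<noteq> \<infinity>" if "X \<in> lessThan ` \<rat>" for X
      using that M_lt fin unfolding \<kappa>_def by (auto simp: ennreal_mult_eq_top_iff split: if_splits)
  qed
  have "(\<integral>\<^sup>+x. H x * F (norm x) \<partial>lborel) = (\<integral>\<^sup>+x. F (norm x) \<partial>density lborel H)"
    by (subst nn_integral_density) auto
  also have "\<dots> = (\<integral>\<^sup>+r. F r \<partial>M)"
    unfolding M_def by (subst nn_integral_distr) auto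
  also have "\<dots> = (\<integral>\<^sup>+r. F r \<partial>D)" using \<open>M = D\<close> by simp
  also have "\<dots> = (\<integral>\<^sup>+r. \<kappa> * (ennreal (real n * r^(n-1)) * indicator {0..} r * F r) \<partial>lborel)"
    unfolding D_def by (subst nn_integral_density) (auto simp: mult.assoc)
  also have "\<dots> = \<kappa> * (\<integral>\<^sup>+r. ennreal (real n * r^(n-1)) * indicator {0..} r * F r \<partial>lborel)"
    by (subst nn_integral_cmult) auto
  finally show ?thesis by (simp add: \<kappa>_def n_def)
qed


lemma radial_exp_moment:
  fixes a :: real and j :: nat
  assumes a: "a > 0"
  shows "(\<integral>\<^sup>+r. ennreal (real n * r^(n-1)) * indicator {0..} r * ennreal (exp (-a * r) * r^j) \<partial>lborel)
      = ennreal (real n * fact (n - 1 + j) / a^(n+j))" (is "?L = _")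
proof (cases "n = 0")
  case True
  then show ?thesis by simp
next
  case False
  define c0 where "c0 = real n * fact (n-1) / a^n"
  have c0: "c0 \<ge> 0" using a by (simp add: c0_def)
  have "?L = (\<integral>\<^sup>+r. ennreal c0 * ennreal (erlang_density (n-1) a r * r^j) \<partial>lborel)"
  proof (intro nn_integral_cong)
    fix r :: real
    show "ennreal (real n * r^(n-1)) * indicator {0..} r * ennreal (exp (-a * r) * r^j)
       = ennreal c0 * ennreal (erlang_density (n-1) a r * r^j)"
    proof (cases "r \<ge> 0")
      case True
      have Sn: "Suc (n-1) = n" using False by simp
      have "real n * r^(n-1) * (exp (-a * r) * r^j) = c0 * (erlang_density (n-1) a r * r^j)"
        using True a unfolding c0_def erlang_density_def Sn by (simp add: field_simps)
      then show ?thesis using True a c0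
        by (simp add: ennreal_mult'[symmetric] ennreal_mult[symmetric])
    next
      case False
      then show ?thesis by (simp add: erlang_density_def)
    qed
  qed
  also have "\<dots> = ennreal c0 * (\<integral>\<^sup>+r. ennreal (erlang_density (n-1) a r * r^j) \<partial>lborel)"
    by (subst nn_integral_cmult) auto
  also have "\<dots> = ennreal c0 * (fact (n - 1 + j) / (fact (n-1) * a ^ j))"
    using a by (simp add: nn_integral_erlang_ith_moment)
  also have "\<dots> = ennreal (c0 * (fact (n - 1 + j) / (fact (n-1) * a ^ j)))"
  proof -
    have "(fact (n - 1 + j) / (fact (n-1) * a ^ j) :: ennreal) = ennreal (fact (n - 1 + j) / (fact (n-1) * a ^ j))"
      using a by (simp add: divide_ennreal ennreal_mult'[symmetric])
    then show ?thesis using c0 a by (subst ennreal_mult) auto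
  qed
  also have "c0 * (fact (n - 1 + j) / (fact (n-1) * a ^ j)) = real n * fact (n - 1 + j) / a^(n+j)"
    using a unfolding c0_def by (simp add: power_add field_simps)
  finally show ?thesis .
qed


lemma l2_const_eq:
  fixes eps :: real assumes eps: "eps > 0" and N: "N > 0"
  shows "eps ^ N * Gamma (real N / 2 + 1) / (pi powr (real N / 2) * Gamma (real N + 1))
       * unit_ball_vol (real N) * (real N * fact (N - 1 + j) / eps^(N+j))
       = fact (N - 1 + j) / (fact (N - 1) * eps^j)"
proof -
  define P where "P = pi powr (real N / 2)"
  define Gh where "Gh = Gamma (real N / 2 + 1)"
  define X :: real where "X = fact (N - 1 + j)"
  define Fm :: real where "Fm = fact (N - 1)"
  have G: "Gamma (real N + 1) = real N * Fm"
  proof -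
    have "Gamma (real N + 1) = fact N"
      using Gamma_fact[of N] by (simp add: add.commute)
    also have "(fact N :: real) = real N * fact (N - 1)"
      using N by (cases N) auto
    finally show ?thesis by (simp add: Fm_def)
  qed
  have gp: "Gh > 0" unfolding Gh_def by (intro Gamma_real_pos) simp
  have pp: "P > 0" unfolding P_def by simp
  have fp: "Fm > 0" unfolding Fm_def by simp
  have Np: "real N > 0" using N by simp
  have e: "eps ^ (N + j) = eps^N * eps^j" by (simp add: power_add)
  have ep: "eps ^ N > 0" "eps ^ j > 0" using eps by simp_all
  have "eps ^ N * Gh / (P * (real N * Fm)) * (P / Gh) * (real N * X / (eps^N * eps^j))
      = X / (Fm * eps^j)"
    using gp pp fp Np ep eps by (simp add: field_simps)
  then show ?thesis unfolding unit_ball_vol_def G e P_def Gh_def X_def Fm_def .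
qed

lemma l2_moment:
  fixes eps :: real and j :: nat assumes eps: "eps > 0"
  shows "(\<integral>\<^sup>+(v::real^'n). ennreal (l2_density eps v * norm v ^ j) \<partial>lborel)
     = ennreal (fact (CARD('n) - 1 + j) / (fact (CARD('n) - 1) * eps^j))"
proof -
  define N where "N = CARD('n)"
  define Cst where "Cst = eps ^ N * Gamma (real N / 2 + 1) / (pi powr (real N / 2) * Gamma (real N + 1))"
  have gp: "Gamma (real N / 2 + 1) > 0" "Gamma (real N + 1) > 0" by (intro Gamma_real_pos, simp)+
  have Cst: "Cst > 0" using eps gp unfolding Cst_def by simp
  have N: "N > 0" by (simp add: N_def)
  have "(\<integral>\<^sup>+(v::real^'n). ennreal (l2_density eps v * norm v ^ j) \<partial>lborel)
     = (\<integral>\<^sup>+(v::real^'n). ennreal Cst * ennreal (exp (-eps * norm v) * norm v ^ j) \<partial>lborel)"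
    using Cst by (intro nn_integral_cong) (simp add: l2_density_def Cst_def N_def ennreal_mult'[symmetric] mult.assoc)
  also have "\<dots> = ennreal Cst * (\<integral>\<^sup>+(v::real^'n). ennreal (exp (-eps * norm v) * norm v ^ j) \<partial>lborel)"
    by (subst nn_integral_cmult) auto
  also have "(\<integral>\<^sup>+(v::real^'n). ennreal (exp (-eps * norm v) * norm v ^ j) \<partial>lborel)
      = (\<integral>\<^sup>+(v::real^'n). (\<lambda>_. 1) v * (\<lambda>r. ennreal (exp (-eps * r) * r ^ j)) (norm v) \<partial>lborel)"
    by simp
  also have "\<dots> = (\<integral>\<^sup>+(x::real^'n). 1 * indicator (ball 0 1) x \<partial>lborel) *
      (\<integral>\<^sup>+r. ennreal (real DIM(real^'n) * r^(DIM(real^'n)-1)) * indicator {0..} r * ennreal (exp (-eps * r) * r ^ j) \<partial>lborel)"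
    using emeasure_lborel_ball_finite[of "0::real^'n" 1] by (intro polar) auto
  also have "(\<integral>\<^sup>+(x::real^'n). 1 * indicator (ball 0 1) x \<partial>lborel) = ennreal (unit_ball_vol (real N))"
    by (simp add: emeasure_ball N_def)
  also have "(\<integral>\<^sup>+r. ennreal (real DIM(real^'n) * r^(DIM(real^'n)-1)) * indicator {0..} r * ennreal (exp (-eps * r) * r ^ j) \<partial>lborel)
     = ennreal (real N * fact (N - 1 + j) / eps^(N+j))"
    using radial_exp_moment[OF eps, of N j] by (simp add: N_def)
  also have "ennreal Cst * (ennreal (unit_ball_vol (real N)) * ennreal (real N * fact (N - 1 + j) / eps^(N+j)))
     = ennreal (Cst * unit_ball_vol (real N) * (real N * fact (N - 1 + j) / eps^(N+j)))"
    using Cst eps by (simp add: ennreal_mult'[symmetric] ennreal_mult[symmetric] mult.assoc)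
  also have "Cst * unit_ball_vol (real N) * (real N * fact (N - 1 + j) / eps^(N+j)) = fact (N - 1 + j) / (fact (N - 1) * eps^j)"
    unfolding Cst_def using l2_const_eq[OF eps N] .
  finally show ?thesis by (simp add: N_def)
qed

lemma privacy_integral:
  fixes g :: "'a::euclidean_space measure" and \<phi> :: "'a \<Rightarrow> ennreal"
  assumes lp: "lipschitz_private eps (additive_mech g)" and pg: "prob_space g"
    and sg[measurable_cong]: "sets g = sets borel"
    and phi[measurable]: "\<phi> \<in> borel_measurable borel"
  shows "(\<integral>\<^sup>+v. \<phi> (u + v) \<partial>g) \<le> ennreal (exp (eps * norm (u - u'))) * (\<integral>\<^sup>+v. \<phi> (u' + v) \<partial>g)"
proof -
  interpret g: prob_space g by (rule pg)
  define Q where "Q = additive_mech g"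
  have Qd: "Q w = distr g borel (\<lambda>v. w + v)" for w by (simp add: Q_def additive_mech_def)
  have pQ: "prob_space (Q w)" for w unfolding Qd by (rule g.prob_space_distr) measurable
  have le: "Q u \<le> scale_measure (ennreal (exp (eps * norm (u - u')))) (Q u')"
  proof (subst le_measure)
    show "sets (Q u) = sets (scale_measure (ennreal (exp (eps * norm (u - u')))) (Q u'))"
      by (simp add: Qd)
    show "\<forall>A\<in>sets (Q u). emeasure (Q u) A \<le> emeasure (scale_measure (ennreal (exp (eps * norm (u - u')))) (Q u')) A"
    proof
      fix A assume A: "A \<in> sets (Q u)"
      then have A': "A \<in> sets (Q u')" by (simp add: Qd)
      have "measure (Q u) A \<le> exp (eps * norm (u - u')) * measure (Q u') A"
        using lp A unfolding lipschitz_private_def Q_def by blast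
      then have "ennreal (measure (Q u) A) \<le> ennreal (exp (eps * norm (u - u'))) * ennreal (measure (Q u') A)"
        by (simp add: ennreal_mult[symmetric])
      then show "emeasure (Q u) A \<le> emeasure (scale_measure (ennreal (exp (eps * norm (u - u')))) (Q u')) A"
        using finite_measure.emeasure_eq_measure[OF prob_space.finite_measure[OF pQ]] by simp
    qed
  qed
  have "(\<integral>\<^sup>+v. \<phi> (u + v) \<partial>g) = (\<integral>\<^sup>+z. \<phi> z \<partial>Q u)"
    unfolding Qd by (subst nn_integral_distr) auto
  also have "\<dots> \<le> (\<integral>\<^sup>+z. \<phi> z \<partial>scale_measure (ennreal (exp (eps * norm (u - u')))) (Q u'))"
    by (rule nn_integral_mono_measure[OF _ le]) (simp add: Qd)
  also have "\<dots> = ennreal (exp (eps * norm (u - u'))) * (\<integral>\<^sup>+z. \<phi> z \<partial>Q u')"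
    by (rule nn_integral_scale_measure) (simp add: Qd)
  also have "(\<integral>\<^sup>+z. \<phi> z \<partial>Q u') = (\<integral>\<^sup>+v. \<phi> (u' + v) \<partial>g)"
    unfolding Qd by (subst nn_integral_distr) auto
  finally show ?thesis .
qed



lemma polar_moment:
  fixes H :: "real^'n \<Rightarrow> ennreal" and a :: real and j :: nat
  assumes Hm[measurable]: "H \<in> borel_measurable borel"
   and fin: "(\<integral>\<^sup>+x. H x * indicator (ball 0 1) x \<partial>lborel) < \<infinity>"
   and hom: "\<And>t x. t > 0 \<Longrightarrow> H (t *\<^sub>R x) = H x"
   and a: "a > 0"
  shows "(\<integral>\<^sup>+x. H x * ennreal (exp (-a * norm x) * norm x ^ j) \<partial>lborel)
     = (\<integral>\<^sup>+x. H x * indicator (ball 0 1) x \<partial>lborel) * ennreal (real CARD('n) * fact (CARD('n) - 1 + j) / a^(CARD('n)+j))"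
proof -
  have "(\<integral>\<^sup>+x. H x * (\<lambda>r. ennreal (exp (-a * r) * r ^ j)) (norm x) \<partial>lborel)
    = (\<integral>\<^sup>+x. H x * indicator (ball 0 1) x \<partial>lborel) *
      (\<integral>\<^sup>+r. ennreal (real DIM(real^'n) * r^(DIM(real^'n)-1)) * indicator {0..} r * ennreal (exp (-a * r) * r ^ j) \<partial>lborel)"
    by (rule polar[OF Hm _ fin hom]) auto
  then show ?thesis using radial_exp_moment[OF a, of "CARD('n)" j] by simp
qed

lemma pw_alg:
  fixes h G s c :: real
  assumes "(G \<le> h \<and> c \<le> s) \<or> (h \<le> G \<and> s \<le> c)"
  shows "c * h + G * s \<le> h * s + c * G"
proof -
  have "0 \<le> (h - G) * (s - c)"
    using assms by (auto intro: mult_nonneg_nonneg mult_nonpos_nonpos)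
  moreover have "(h - G) * (s - c) = h * s + c * G - (c * h + G * s)" by (simp add: algebra_simps)
  ultimately show ?thesis by linarith
qed

lemma mlr_bound:
  fixes h :: "real^'n \<Rightarrow> ennreal" and eps B :: real
  assumes hm[measurable]: "h \<in> borel_measurable borel"
    and bnd: "\<And>x. h x \<le> ennreal B"
    and lip: "\<And>a b. h a \<le> ennreal (exp (eps * norm (a - b))) * h b"
    and eps: "eps > 0"
    and int1: "(\<integral>\<^sup>+x. h x \<partial>lborel) = 1"
  shows "ennreal (real CARD('n) * (real CARD('n) + 1) / eps^2) \<le> (\<integral>\<^sup>+x. h x * ennreal (norm x ^ 2) \<partial>lborel)"
proof -
  define N where "N = CARD('n)"
  define c where "c = real N * (real N + 1) / eps^2"
  define \<rho> where "\<rho> = sqrt c"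
  have Npos: "N > 0" by (simp add: N_def)
  have cpos: "c > 0" using eps Npos by (simp add: c_def)
  have rho: "\<rho> > 0" "\<rho>^2 = c" using cpos by (auto simp: \<rho>_def)
  define hr where "hr x = enn2real (h x)" for x
  have hfin: "h x = ennreal (hr x)" for x
    using bnd[of x] unfolding hr_def by (metis ennreal_enn2real ennreal_less_top order.strict_trans1)
  have hr0: "hr x \<ge> 0" for x by (simp add: hr_def)
  have hrB: "hr x \<le> max 0 B" for x
    using hfin[of x] bnd[of x] by (metis ennreal_le_iff2 max.cobounded1 max.commute max_def)
  have hrm[measurable]: "hr \<in> borel_measurable borel" unfolding hr_def[abs_def] by measurable
  have lipr: "hr a \<le> exp (eps * norm (a - b)) * hr b" for a b
  proof -
    have "ennreal (hr a) \<le> ennreal (exp (eps * norm (a - b)) * hr b)"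
      using lip[of a b] hfin[of a] hfin[of b] hr0[of b] by (simp add: ennreal_mult)
    then show ?thesis using hr0[of b] by (simp add: ennreal_le_iff)
  qed
  define y where "y x = (\<rho> / norm x) *\<^sub>R x" for x :: "real^'n"
  define Hf where "Hf x = hr (y x) * exp (eps * \<rho>)" for x
  define H where "H x = ennreal (Hf x)" for x
  define G where "G x = Hf x * exp (-eps * norm x)" for x
  have Hf0: "Hf x \<ge> 0" for x unfolding Hf_def using hr0 by simp
  have G0: "G x \<ge> 0" for x unfolding G_def using Hf0 by simp
  have Hm[measurable]: "H \<in> borel_measurable borel" unfolding H_def Hf_def y_def by measurable
  have Gm[measurable]: "G \<in> borel_measurable borel" unfolding G_def Hf_def y_def by measurable
  have yhom: "y (t *\<^sub>R x) = y x" if "t > 0" for t x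
    using that by (cases "x = 0") (auto simp: y_def)
  have hom: "H (t *\<^sub>R x) = H x" if "t > 0" for t x
    using yhom[OF that] by (simp add: H_def Hf_def)
  have kfin: "(\<integral>\<^sup>+x. H x * indicator (ball 0 1) x \<partial>lborel) < \<infinity>"
  proof -
    have "(\<integral>\<^sup>+x. H x * indicator (ball 0 1) x \<partial>lborel) \<le> (\<integral>\<^sup>+(x::real^'n). ennreal (max 0 B * exp (eps * \<rho>)) * indicator (ball 0 1) x \<partial>lborel)"
    proof (intro nn_integral_mono)
      fix x
      have "Hf x \<le> max 0 B * exp (eps * \<rho>)" unfolding Hf_def using hrB[of "y x"] by simp
      then show "H x * indicator (ball 0 1) x \<le> ennreal (max 0 B * exp (eps * \<rho>)) * indicator (ball 0 1) x"
        unfolding H_def by (auto simp: indicator_def)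
    qed
    also have "\<dots> = ennreal (max 0 B * exp (eps * \<rho>)) * emeasure lborel (ball (0::real^'n) 1)"
      by (subst nn_integral_cmult_indicator) auto
    also have "\<dots> < \<infinity>" using emeasure_lborel_ball_finite[of "0::real^'n" 1]
      by (simp add: ennreal_mult_less_top)
    finally show ?thesis .
  qed
  define \<kappa> where "\<kappa> = (\<integral>\<^sup>+x. H x * indicator (ball 0 1) x \<partial>lborel)"
  have IG: "(\<integral>\<^sup>+x. ennreal (G x * norm x ^ j) \<partial>lborel) = \<kappa> * ennreal (real N * fact (N - 1 + j) / eps^(N+j))" for j
  proof -
    have "(\<integral>\<^sup>+x. ennreal (G x * norm x ^ j) \<partial>lborel) = (\<integral>\<^sup>+x. H x * ennreal (exp (-eps * norm x) * norm x ^ j) \<partial>lborel)"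
      using Hf0 by (intro nn_integral_cong) (simp add: G_def H_def ennreal_mult[symmetric] mult.assoc)
    also have "\<dots> = \<kappa> * ennreal (real N * fact (N - 1 + j) / eps^(N+j))"
      unfolding \<kappa>_def N_def by (rule polar_moment[OF Hm kfin hom eps])
    finally show ?thesis .
  qed
  have IG2: "(\<integral>\<^sup>+x. ennreal (G x * norm x ^ 2) \<partial>lborel) = ennreal c * (\<integral>\<^sup>+x. ennreal (G x * norm x ^ 0) \<partial>lborel)"
  proof -
    have e: "real N * fact (N - 1 + 2) / eps^(N+2) = c * (real N * fact (N - 1 + 0) / eps^(N+0))"
    proof -
      have f1: "N - 1 + 2 = Suc N" using Npos by simp
      have f2: "(fact N::real) = real N * fact (N-1)" using Npos by (cases N) auto
      have f: "(fact (N - 1 + 2) :: real) = (real N + 1) * real N * fact (N - 1)"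
        unfolding f1 fact_Suc f2 by (simp add: algebra_simps)
      show ?thesis unfolding f c_def using eps by (simp add: power_add field_simps power2_eq_square)
    qed
    have m: "ennreal (c * (real N * fact (N - 1 + 0) / eps^(N+0))) = ennreal c * ennreal (real N * fact (N - 1 + 0) / eps^(N+0))"
      using cpos eps by (intro ennreal_mult) auto
    show ?thesis unfolding IG e m by (rule mult.left_commute)
  qed
  have IG0fin: "(\<integral>\<^sup>+x. ennreal (G x * norm x ^ 0) \<partial>lborel) < \<infinity>"
    unfolding IG using kfin unfolding \<kappa>_def by (simp add: ennreal_mult_less_top)
  have pw: "c * hr x + G x * (norm x)^2 \<le> hr x * (norm x)^2 + c * G x" for x
  proof (cases "x = 0")
    case True
    have "1 \<le> exp (eps * \<rho>)" using rho eps by simp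
    then have "hr 0 * 1 \<le> hr 0 * exp (eps * \<rho>)" using hr0[of 0] by (intro mult_left_mono) auto
    then have "hr 0 \<le> G 0" unfolding G_def Hf_def y_def by simp
    then show ?thesis using True cpos by simp
  next
    case False
    then have nx: "norm x > 0" by simp
    have xy: "x - y x = (1 - \<rho> / norm x) *\<^sub>R x" by (simp add: y_def algebra_simps)
    have nxy: "norm (x - y x) = \<bar>norm x - \<rho>\<bar>"
    proof -
      have "norm (x - y x) = \<bar>1 - \<rho> / norm x\<bar> * norm x" by (simp add: xy)
      also have "\<dots> = \<bar>(1 - \<rho> / norm x) * norm x\<bar>" using nx by (simp add: abs_mult)
      also have "(1 - \<rho> / norm x) * norm x = norm x - \<rho>" using nx by (simp add: field_simps)
      finally show ?thesis .
    qed
    have e1: "exp (eps * \<rho>) * exp (-eps * norm x) = exp (eps * (\<rho> - norm x))"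
      by (subst exp_add[symmetric]) (simp add: right_diff_distrib)
    have Gx: "G x = hr (y x) * exp (eps * (\<rho> - norm x))"
      unfolding G_def Hf_def e1[symmetric] by (simp only: mult.assoc)
    have e2: "exp (eps * (norm x - \<rho>)) * exp (eps * (\<rho> - norm x)) = 1"
      by (subst exp_add[symmetric]) (simp add: right_diff_distrib)
    show ?thesis
    proof (rule pw_alg, cases "norm x \<ge> \<rho>")
      case True
      have n1: "norm (y x - x) = norm x - \<rho>"
        using nxy True norm_minus_commute[of "y x" x] by simp
      have "hr (y x) \<le> exp (eps * (norm x - \<rho>)) * hr x"
        using lipr[of "y x" x] unfolding n1 .
      then have "hr (y x) * exp (eps * (\<rho> - norm x)) \<le> exp (eps * (norm x - \<rho>)) * hr x * exp (eps * (\<rho> - norm x))"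
        by (intro mult_right_mono) auto
      also have "exp (eps * (norm x - \<rho>)) * hr x * exp (eps * (\<rho> - norm x)) = hr x * (exp (eps * (norm x - \<rho>)) * exp (eps * (\<rho> - norm x)))"
        by (simp add: mult_ac)
      also have "\<dots> = hr x" unfolding e2 by simp
      finally have "G x \<le> hr x" unfolding Gx .
      moreover have "\<rho>^2 \<le> (norm x)^2"
        using True rho by (intro power_mono) auto
      ultimately show "(G x \<le> hr x \<and> c \<le> (norm x)^2) \<or> (hr x \<le> G x \<and> (norm x)^2 \<le> c)"
        using rho by simp
    next
      case False
      have n1: "norm (x - y x) = \<rho> - norm x"
        using nxy False by simp
      have "hr x \<le> exp (eps * (\<rho> - norm x)) * hr (y x)"
        using lipr[of x "y x"] unfolding n1 .
      then have "hr x \<le> G x" unfolding Gx by (simp only: mult.commute)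
      moreover have "(norm x)^2 \<le> \<rho>^2"
        using False by (intro power_mono) auto
      ultimately show "(G x \<le> hr x \<and> c \<le> (norm x)^2) \<or> (hr x \<le> G x \<and> (norm x)^2 \<le> c)"
        using rho by simp
    qed
  qed
  have "(\<integral>\<^sup>+x. ennreal (c * hr x) + ennreal (G x * norm x ^ 2) \<partial>lborel)
      \<le> (\<integral>\<^sup>+x. ennreal (hr x * norm x ^ 2) + ennreal (c * G x) \<partial>lborel)"
  proof (intro nn_integral_mono)
    fix x
    have "ennreal (c * hr x + G x * norm x ^ 2) \<le> ennreal (hr x * norm x ^ 2 + c * G x)"
      using pw[of x] by (intro ennreal_leI) simp
    moreover have "ennreal (c * hr x) + ennreal (G x * norm x ^ 2) = ennreal (c * hr x + G x * norm x ^ 2)"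
      using hr0[of x] G0[of x] cpos by (intro ennreal_plus[symmetric]) auto
    moreover have "ennreal (hr x * norm x ^ 2) + ennreal (c * G x) = ennreal (hr x * norm x ^ 2 + c * G x)"
      using hr0[of x] G0[of x] cpos by (intro ennreal_plus[symmetric]) auto
    ultimately show "ennreal (c * hr x) + ennreal (G x * norm x ^ 2) \<le> ennreal (hr x * norm x ^ 2) + ennreal (c * G x)"
      by simp
  qed
  also have "(\<integral>\<^sup>+x. ennreal (c * hr x) + ennreal (G x * norm x ^ 2) \<partial>lborel)
      = (\<integral>\<^sup>+x. ennreal (c * hr x) \<partial>lborel) + (\<integral>\<^sup>+x. ennreal (G x * norm x ^ 2) \<partial>lborel)"
    by (rule nn_integral_add) measurable
  also have "(\<integral>\<^sup>+x. ennreal (c * hr x) \<partial>lborel) = ennreal c"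
  proof -
    have "(\<integral>\<^sup>+x. ennreal (c * hr x) \<partial>lborel) = (\<integral>\<^sup>+x. ennreal c * h x \<partial>lborel)"
      using cpos hr0 by (intro nn_integral_cong) (simp add: hfin ennreal_mult)
    also have "\<dots> = ennreal c" by (subst nn_integral_cmult) (auto simp: int1)
    finally show ?thesis .
  qed
  also have "(\<integral>\<^sup>+x. ennreal (hr x * norm x ^ 2) + ennreal (c * G x) \<partial>lborel)
      = (\<integral>\<^sup>+x. h x * ennreal (norm x ^ 2) \<partial>lborel) + ennreal c * (\<integral>\<^sup>+x. ennreal (G x * norm x ^ 0) \<partial>lborel)"
  proof -
    have "(\<integral>\<^sup>+x. ennreal (hr x * norm x ^ 2) + ennreal (c * G x) \<partial>lborel)
      = (\<integral>\<^sup>+x. ennreal (hr x * norm x ^ 2) \<partial>lborel) + (\<integral>\<^sup>+x. ennreal (c * G x) \<partial>lborel)"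
      by (rule nn_integral_add) measurable
    also have "(\<integral>\<^sup>+x. ennreal (hr x * norm x ^ 2) \<partial>lborel) = (\<integral>\<^sup>+x. h x * ennreal (norm x ^ 2) \<partial>lborel)"
      using hr0 by (intro nn_integral_cong) (simp add: hfin ennreal_mult)
    also have "(\<integral>\<^sup>+x. ennreal (c * G x) \<partial>lborel) = (\<integral>\<^sup>+x. ennreal c * ennreal (G x * norm x ^ 0) \<partial>lborel)"
      using cpos G0 by (intro nn_integral_cong) (simp add: ennreal_mult)
    also have "\<dots> = ennreal c * (\<integral>\<^sup>+x. ennreal (G x * norm x ^ 0) \<partial>lborel)"
      by (subst nn_integral_cmult) auto
    finally show ?thesis .
  qed
  finally have A0: "ennreal c + (\<integral>\<^sup>+x. ennreal (G x * norm x ^ 2) \<partial>lborel)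
     \<le> (\<integral>\<^sup>+x. h x * ennreal (norm x ^ 2) \<partial>lborel) + ennreal c * (\<integral>\<^sup>+x. ennreal (G x * norm x ^ 0) \<partial>lborel)" .
  define X where "X = ennreal c * (\<integral>\<^sup>+x. ennreal (G x * norm x ^ 0) \<partial>lborel)"
  define I where "I = (\<integral>\<^sup>+x. h x * ennreal (norm x ^ 2) \<partial>lborel)"
  have A: "X + ennreal c \<le> X + I"
    using A0 unfolding IG2 X_def[symmetric] I_def[symmetric] by (simp add: add.commute)
  moreover have "X \<noteq> \<infinity>"
    using IG0fin unfolding X_def by (simp add: ennreal_mult_eq_top_iff)
  ultimately have "ennreal c \<le> I"
    by (simp add: ennreal_add_left_cancel_le)
  then have "ennreal c \<le> (\<integral>\<^sup>+x. h x * ennreal (norm x ^ 2) \<partial>lborel)" unfolding I_def .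
  then show ?thesis by (simp add: c_def N_def)
qed



lemma l2_meas[measurable]: "l2_density e \<in> borel_measurable borel"
  unfolding l2_density_def[abs_def] by measurable

lemma l2_const_pos:
  assumes "e > 0"
  shows "e ^ CARD('n) * Gamma (real CARD('n) / 2 + 1) / (pi powr (real CARD('n) / 2) * Gamma (real CARD('n) + 1)) > 0"
proof -
  have "Gamma (real CARD('n) / 2 + 1) > 0" "Gamma (real CARD('n) + 1) > 0" by (intro Gamma_real_pos, simp)+
  then show ?thesis using assms by simp
qed

lemma l2_nonneg: "e > 0 \<Longrightarrow> l2_density e (v::real^'n) \<ge> 0"
  unfolding l2_density_def using l2_const_pos[of e, where 'n='n] by simp

lemma l2_le0: "e > 0 \<Longrightarrow> l2_density e (v::real^'n) \<le> l2_density e (0::real^'n)"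
  unfolding l2_density_def using l2_const_pos[of e, where 'n='n]
  by (intro mult_left_mono) auto

lemma l2_sym: "l2_density e (-a + v) = l2_density e (a - v)"
proof -
  have "-a + v = -(a - v)" by simp
  then have "norm (-a + v) = norm (a - v)" by (simp only: norm_minus_cancel)
  then show ?thesis unfolding l2_density_def by simp
qed

lemma nn_integral_translate:
  fixes f :: "'a::euclidean_space \<Rightarrow> ennreal"
  assumes [measurable]: "f \<in> borel_measurable borel"
  shows "(\<integral>\<^sup>+x. f x \<partial>lborel) = (\<integral>\<^sup>+w. f (v + w) \<partial>lborel)"
proof -
  have "(\<integral>\<^sup>+w. f (v + w) \<partial>lborel) = (\<integral>\<^sup>+x. f x \<partial>distr lborel borel ((+) v))"
    by (subst nn_integral_distr) auto
  then show ?thesis by (simp add: lborel_distr_plus)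
qed

lemma sq_split:
  fixes p q d :: real
  assumes "p \<ge> 0" "q \<ge> 0" "d > 0"
  shows "(p + q)^2 \<le> (1 + d) * p^2 + (1 + 1/d) * q^2"
proof -
  have "(1 + d) * p^2 + (1 + 1/d) * q^2 - (p + q)^2 = (d * p - q)^2 / d"
    using assms by (simp add: field_simps power2_eq_square)
  moreover have "(d * p - q)^2 / d \<ge> 0" using assms by simp
  ultimately show ?thesis by linarith
qed

lemma norm_sq_split:
  fixes v w :: "'a::real_normed_vector" and d :: real
  assumes "d > 0"
  shows "norm (v + w) ^ 2 \<le> (1 + d) * norm v ^ 2 + (1 + 1/d) * norm w ^ 2"
proof -
  have "norm (v + w) ^ 2 \<le> (norm v + norm w) ^ 2"
    by (intro power_mono norm_triangle_ineq) auto
  also have "\<dots> \<le> (1 + d) * norm v ^ 2 + (1 + 1/d) * norm w ^ 2"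
    using assms by (intro sq_split) auto
  finally show ?thesis .
qed



lemma conv_bound:
  fixes eps d :: real and g :: "(real^'n) measure"
  assumes eps: "eps > 0" and pg: "prob_space g" and sg[measurable_cong]: "sets g = sets borel"
    and lp: "lipschitz_private eps (additive_mech g)" and d: "d > 0"
  shows "ennreal (real CARD('n) * (real CARD('n) + 1) / eps^2)
     \<le> ennreal (1 + d) * (\<integral>\<^sup>+v. ennreal (norm v ^ 2) \<partial>g)
        + ennreal ((1 + 1/d) * (real CARD('n) * (real CARD('n) + 1) * d^2))"
proof -
  interpret g: prob_space g by (rule pg)
  interpret lg: pair_sigma_finite lborel g ..
  define N where "N = CARD('n)"
  define K where "K = (l2_density (1/d) :: real^'n \<Rightarrow> real)"
  have d1: "1/d > 0" using d by simp
  have Km[measurable]: "K \<in> borel_measurable borel" unfolding K_def by measurable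
  have K0: "K v \<ge> 0" for v unfolding K_def using l2_nonneg[OF d1] .
  have Kb: "K v \<le> K 0" for v unfolding K_def using l2_le0[OF d1] .
  have Ksym: "K (-a + v) = K (a - v)" for a v unfolding K_def by (rule l2_sym)
  have KI: "(\<integral>\<^sup>+w. ennreal (K w) \<partial>lborel) = 1"
    using l2_moment[OF d1, of 0, where 'n='n] unfolding K_def by simp
  have KI2: "(\<integral>\<^sup>+w. ennreal (K w * norm w ^ 2) \<partial>lborel) = ennreal (real N * (real N + 1) * d^2)"
  proof -
    have "(\<integral>\<^sup>+w. ennreal (K w * norm w ^ 2) \<partial>lborel) = ennreal (fact (N - 1 + 2) / (fact (N - 1) * (1/d)^2))"
      using l2_moment[OF d1, of 2, where 'n='n] unfolding K_def N_def by simp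
    also have "fact (N - 1 + 2) / (fact (N - 1) * (1/d)^2) = real N * (real N + 1) * d^2"
    proof -
      have Npos: "N > 0" by (simp add: N_def)
      have f1: "N - 1 + 2 = Suc N" using Npos by simp
      have f2: "(fact N::real) = real N * fact (N-1)" using Npos by (cases N) auto
      have f: "(fact (N - 1 + 2) :: real) = (real N + 1) * real N * fact (N - 1)"
        unfolding f1 fact_Suc f2 by (simp add: algebra_simps)
      show ?thesis unfolding f using d by (simp add: field_simps power2_eq_square)
    qed
    finally show ?thesis .
  qed
  have pm[measurable]: "(\<lambda>(x, v). ennreal (K (x - v))) \<in> borel_measurable (lborel \<Otimes>\<^sub>M g)"
    by measurable
  define h where "h x = (\<integral>\<^sup>+v. ennreal (K (x - v)) \<partial>g)" for x
  have hm[measurable]: "h \<in> borel_measurable borel"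
  proof -
    have "h \<in> borel_measurable lborel"
      unfolding h_def using pm by (rule g.borel_measurable_nn_integral[where f="\<lambda>x v. ennreal (K (x - v))"])
    then show ?thesis by simp
  qed
  have bnd: "h x \<le> ennreal (K 0)" for x
  proof -
    have "h x \<le> (\<integral>\<^sup>+v. ennreal (K 0) \<partial>g)"
      unfolding h_def by (intro nn_integral_mono ennreal_leI Kb)
    also have "\<dots> = ennreal (K 0)" by (simp add: g.emeasure_space_1)
    finally show ?thesis .
  qed
  have lip: "h a \<le> ennreal (exp (eps * norm (a - b))) * h b" for a b
  proof -
    have "(\<integral>\<^sup>+v. ennreal (K (-a + v)) \<partial>g) \<le> ennreal (exp (eps * norm (-a - -b))) * (\<integral>\<^sup>+v. ennreal (K (-b + v)) \<partial>g)"
      by (rule privacy_integral[OF lp pg sg]) measurable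
    moreover have "norm (-a - -b) = norm (a - b)"
    proof -
      have "-a - -b = -(a - b)" by simp
      then show ?thesis by (simp only: norm_minus_cancel)
    qed
    ultimately show ?thesis unfolding h_def Ksym by simp
  qed
  have int1: "(\<integral>\<^sup>+x. h x \<partial>lborel) = 1"
  proof -
    have "(\<integral>\<^sup>+x. h x \<partial>lborel) = (\<integral>\<^sup>+v. (\<integral>\<^sup>+x. ennreal (K (x - v)) \<partial>lborel) \<partial>g)"
      unfolding h_def by (rule lg.Fubini'[symmetric]) measurable
    also have "\<dots> = (\<integral>\<^sup>+v. 1 \<partial>g)"
    proof (intro nn_integral_cong)
      fix v :: "real^'n"
      have "(\<integral>\<^sup>+x. ennreal (K (x - v)) \<partial>lborel) = (\<integral>\<^sup>+w. ennreal (K (v + w - v)) \<partial>lborel)"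
        by (rule nn_integral_translate) measurable
      then show "(\<integral>\<^sup>+x. ennreal (K (x - v)) \<partial>lborel) = 1" using KI by simp
    qed
    also have "\<dots> = 1" by (simp add: g.emeasure_space_1)
    finally show ?thesis .
  qed
  have low: "ennreal (real CARD('n) * (real CARD('n) + 1) / eps^2) \<le> (\<integral>\<^sup>+x. h x * ennreal (norm x ^ 2) \<partial>lborel)"
    by (rule mlr_bound[OF hm bnd lip eps int1])
  define C where "C = ennreal ((1 + 1/d) * (real N * (real N + 1) * d^2))"
  have up: "(\<integral>\<^sup>+x. h x * ennreal (norm x ^ 2) \<partial>lborel) \<le> ennreal (1 + d) * (\<integral>\<^sup>+v. ennreal (norm v ^ 2) \<partial>g) + C"
  proof -
    have "(\<integral>\<^sup>+x. h x * ennreal (norm x ^ 2) \<partial>lborel) = (\<integral>\<^sup>+x. (\<integral>\<^sup>+v. ennreal (K (x - v)) * ennreal (norm x ^ 2) \<partial>g) \<partial>lborel)"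
      unfolding h_def by (intro nn_integral_cong) (simp add: nn_integral_multc)
    also have "\<dots> = (\<integral>\<^sup>+v. (\<integral>\<^sup>+x. ennreal (K (x - v)) * ennreal (norm x ^ 2) \<partial>lborel) \<partial>g)"
      by (rule lg.Fubini'[symmetric]) measurable
    also have "\<dots> \<le> (\<integral>\<^sup>+v. ennreal ((1 + d) * norm v ^ 2) + C \<partial>g)"
    proof (intro nn_integral_mono)
      fix v :: "real^'n"
      have "(\<integral>\<^sup>+x. ennreal (K (x - v)) * ennreal (norm x ^ 2) \<partial>lborel) = (\<integral>\<^sup>+w. ennreal (K (v + w - v)) * ennreal (norm (v + w) ^ 2) \<partial>lborel)"
        by (rule nn_integral_translate) measurable
      also have "\<dots> \<le> (\<integral>\<^sup>+w. ennreal ((1 + d) * norm v ^ 2) * ennreal (K w) + ennreal (1 + 1/d) * ennreal (K w * norm w ^ 2) \<partial>lborel)"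
      proof (intro nn_integral_mono)
        fix w :: "real^'n"
        have r: "K w * norm (v + w) ^ 2 \<le> (1 + d) * norm v ^ 2 * K w + (1 + 1/d) * (K w * norm w ^ 2)"
        proof -
          have "K w * norm (v + w) ^ 2 \<le> K w * ((1 + d) * norm v ^ 2 + (1 + 1/d) * norm w ^ 2)"
            using norm_sq_split[OF d, of v w] K0[of w] by (intro mult_left_mono) auto
          then show ?thesis by (simp add: algebra_simps)
        qed
        have p1: "0 \<le> (1 + d) * norm v ^ 2 * K w" using d K0[of w] by simp
        have p2: "0 \<le> (1 + 1/d) * (K w * norm w ^ 2)" using d K0[of w] by simp
        have "ennreal (K w) * ennreal (norm (v + w) ^ 2) = ennreal (K w * norm (v + w) ^ 2)"
          using K0[of w] by (simp add: ennreal_mult)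
        also have "\<dots> \<le> ennreal ((1 + d) * norm v ^ 2 * K w + (1 + 1/d) * (K w * norm w ^ 2))"
          by (rule ennreal_leI[OF r])
        also have "\<dots> = ennreal ((1 + d) * norm v ^ 2) * ennreal (K w) + ennreal (1 + 1/d) * ennreal (K w * norm w ^ 2)"
          using p1 p2 d K0[of w] by (simp add: ennreal_plus ennreal_mult)
        finally show "ennreal (K (v + w - v)) * ennreal (norm (v + w) ^ 2) \<le> ennreal ((1 + d) * norm v ^ 2) * ennreal (K w) + ennreal (1 + 1/d) * ennreal (K w * norm w ^ 2)"
          by simp
      qed
      also have "\<dots> = ennreal ((1 + d) * norm v ^ 2) * (\<integral>\<^sup>+w. ennreal (K w) \<partial>lborel) + ennreal (1 + 1/d) * (\<integral>\<^sup>+w. ennreal (K w * norm w ^ 2) \<partial>lborel)"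
        by (subst nn_integral_add) (auto simp: nn_integral_cmult)
      also have "\<dots> = ennreal ((1 + d) * norm v ^ 2) + C"
        unfolding KI KI2 C_def using d by (simp add: ennreal_mult)
      finally show "(\<integral>\<^sup>+x. ennreal (K (x - v)) * ennreal (norm x ^ 2) \<partial>lborel) \<le> ennreal ((1 + d) * norm v ^ 2) + C" .
    qed
    also have "\<dots> = (\<integral>\<^sup>+v. ennreal (1 + d) * ennreal (norm v ^ 2) \<partial>g) + (\<integral>\<^sup>+v. C \<partial>g)"
      using d by (subst nn_integral_add) (auto simp: ennreal_mult)
    also have "\<dots> = ennreal (1 + d) * (\<integral>\<^sup>+v. ennreal (norm v ^ 2) \<partial>g) + C"
      by (simp add: nn_integral_cmult g.emeasure_space_1)
    finally show ?thesis .
  qed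
  show ?thesis using low up unfolding C_def N_def by (rule order.trans)
qed



theorem theorem3:
  fixes eps :: real and g :: "(real^'n) measure"
  assumes "eps > 0"
    and "prob_space g" and "sets g = sets borel"
    and "lipschitz_private eps (additive_mech g)"
  shows "(\<integral>\<^sup>+ v. ennreal ((norm v)\<^sup>2) \<partial>g)
           \<ge> (\<integral>\<^sup>+ (v::real^'n). ennreal (l2_density eps v * (norm v)\<^sup>2) \<partial>lborel)
         \<and> (\<integral>\<^sup>+ (v::real^'n). ennreal (l2_density eps v * (norm v)\<^sup>2) \<partial>lborel)
           = ennreal (real CARD('n) * (real CARD('n) + 1) / eps\<^sup>2)"
proof -
  note eps = assms(1)
  define N where "N = CARD('n)"
  define M where "M = real N * (real N + 1)"
  define c where "c = M / eps^2"
  have Npos: "N > 0" by (simp add: N_def)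
  have M0: "M \<ge> 0" by (simp add: M_def)
  have P2: "(\<integral>\<^sup>+ (v::real^'n). ennreal (l2_density eps v * (norm v)\<^sup>2) \<partial>lborel) = ennreal c"
  proof -
    have "(\<integral>\<^sup>+ (v::real^'n). ennreal (l2_density eps v * (norm v)\<^sup>2) \<partial>lborel) = ennreal (fact (N - 1 + 2) / (fact (N - 1) * eps^2))"
      using l2_moment[OF eps, of 2, where 'n='n] unfolding N_def by simp
    also have "fact (N - 1 + 2) / (fact (N - 1) * eps^2) = c"
    proof -
      have f1: "N - 1 + 2 = Suc N" using Npos by simp
      have f2: "(fact N::real) = real N * fact (N-1)" using Npos by (cases N) auto
      have f: "(fact (N - 1 + 2) :: real) = (real N + 1) * real N * fact (N - 1)"
        unfolding f1 fact_Suc f2 by (simp add: algebra_simps)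
      show ?thesis unfolding f c_def M_def using eps by (simp add: field_simps)
    qed
    finally show ?thesis .
  qed
  define A where "A = (\<integral>\<^sup>+ v. ennreal ((norm v)\<^sup>2) \<partial>g)"
  have key: "ennreal c \<le> ennreal (1 + d) * A + ennreal ((1 + 1/d) * (M * d^2))" if "d > 0" for d
    using conv_bound[OF eps assms(2) assms(3) assms(4) that] unfolding A_def c_def M_def N_def
    by (simp add: power2_eq_square)
  have P1: "ennreal c \<le> A"
  proof (cases "A = \<infinity>")
    case True then show ?thesis by simp
  next
    case False
    define a where "a = enn2real A"
    have Aa: "A = ennreal a" using False unfolding a_def by (simp add: less_top)
    have a0: "a \<ge> 0" by (simp add: a_def)
    have keyr: "c \<le> (1 + d) * a + (1 + 1/d) * (M * d^2)" if d: "d > 0" for d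
    proof -
      have "ennreal c \<le> ennreal ((1 + d) * a + (1 + 1/d) * (M * d^2))"
        using key[OF d] d a0 M0 unfolding Aa by (simp add: ennreal_mult ennreal_plus)
      then show ?thesis using d a0 M0 by (subst (asm) ennreal_le_iff) auto
    qed
    show ?thesis
    proof (rule ccontr)
      assume "\<not> ennreal c \<le> A"
      then have ac: "a < c" unfolding Aa using a0 by (simp add: ennreal_le_iff not_le)
      define Q where "Q = a + 2 * M + 1"
      have Q: "Q > 0" using a0 M0 by (simp add: Q_def)
      define d where "d = min 1 ((c - a) / (2 * Q))"
      have d0: "d > 0" using ac Q by (simp add: d_def)
      have d1: "d \<le> 1" by (simp add: d_def)
      have dle: "d \<le> (c - a) / (2 * Q)" by (simp add: d_def)
      have "d * Q \<le> (c - a) / (2 * Q) * Q" using dle Q by (intro mult_right_mono) auto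
      also have "\<dots> = (c - a) / 2" using Q by simp
      finally have dQ: "d * Q \<le> (c - a) / 2" .
      have "(1 + 1/d) * (M * d^2) = M * (d * d) + M * d" using d0 by (simp add: field_simps power2_eq_square)
      also have "\<dots> \<le> M * d + M * d" using d1 d0 M0 by (intro add_right_mono mult_left_mono) (auto simp: mult_le_cancel_right1)
      finally have t: "(1 + 1/d) * (M * d^2) \<le> 2 * M * d" by simp
      have "c \<le> (1 + d) * a + (1 + 1/d) * (M * d^2)" by (rule keyr[OF d0])
      also have "\<dots> \<le> a + d * (a + 2 * M)" using t by (simp add: algebra_simps)
      also have "\<dots> \<le> a + d * Q" using d0 by (simp add: Q_def algebra_simps)
      finally have cc: "c \<le> a + d * Q" .
      have dQ2: "2 * (d * Q) \<le> c - a" using dQ by simp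
      show False using cc dQ2 ac by linarith
    qed
  qed
  show ?thesis using P1 P2 unfolding A_def c_def M_def N_def by simp
qed


end
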